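(* Let $(L,\cap,\uplus)$ be a finite lattice with a semi-graphoid relation $(\cdot\bot\cdot\mid\cdot)$. Define $A\supseteq_{\bot}B$ to mean $(B\bot B\mid A)$. Then: (i) the relation $\supseteq_\bot$ satisfies Armstrong's axioms; (ii) the relation $(\cdot\bot\cdot\mid\cdot)$ restricted to the lattice $L_c$ of elements closed under $\supseteq_\bot$ (with meet $\cap$ and join $X\uplus_c Y=cl(X\uplus Y)$, where $cl(X)$ is the largest element $Y$ with $X\supseteq_\bot Y$) is a semi-graphoid relation on $L_c$; (iii) if the semi-graphoid relation is given by a polymatroid function $h$ on $L$, then the restriction of $h$ to $L_c$ is a polymatroid function on $L_c$.
   Context: A relation $(\cdot\bot\cdot\mid\cdot)$ on a lattice with meet $\cap$ and join $\uplus$ is semi-graphoid if for all elements $X,Y,Z,W$: (Existence) $(X\bot Y\mid X)$; (Symmetry) $(X\bot Y\mid W)$ iff $(Y\bot X\mid W)$; (Decomposition) $(X\bot Y\uplus Z\mid W)$ implies $(X\bot Z\mid W)$; (Contraction) $(X\bot Z\mid W)$ and $(X\bot Y\mid Z\uplus W)$ imply $(X\bot Y\uplus Z\mid W)$; (Weak union) $(X\bot Y\uplus Z\mid W)$ implies $(X\bot Y\mid Z\uplus W)$. A relation $\to$ satisfies Armstrong's axioms if: $X\to Y$ and $Y\to Z$ imply $X\to Z$; $X\supseteq Y$ implies $X\to Y$; $X\to Y$ implies $X\uplus Z\to Y\uplus Z$. An element $X$ is closed under $\supseteq_\bot$ if $X\supseteq_\bot Y$ implies $X\supseteq Y$. A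 polymatroid function on a lattice is a function $h:L\to\mathbb{R}$ that is non-negative, increasing ($X\supseteq Y\Rightarrow h(X)\ge h(Y)$) and submodular ($h(X)+h(Y)\ge h(X\uplus Y)+h(X\cap Y)$). The semi-graphoid relation given by $h$ is: $(X\bot Y\mid Z)$ iff $h(X\uplus Z)+h(Y\uplus Z)=h(X\uplus Y\uplus Z)+h(Z)$. *)

theory Defs
  imports Complex_Main
begin

text \<open>Semi-graphoid relation on a carrier S with join operation j.
  I X Y Z stands for (X \<bottom> Y | Z).\<close>
definition semi_graphoid_on ::
  "'a set \<Rightarrow> ('a \<Rightarrow> 'a \<Rightarrow> 'a) \<Rightarrow> ('a \<Rightarrow> 'a \<Rightarrow> 'a \<Rightarrow> bool) \<Rightarrow> bool" where
  "semi_graphoid_on S j I \<longleftrightarrow>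
     (\<forall>X\<in>S. \<forall>Y\<in>S. I X Y X) \<and>
     (\<forall>X\<in>S. \<forall>Y\<in>S. \<forall>W\<in>S. I X Y W \<longleftrightarrow> I Y X W) \<and>
     (\<forall>X\<in>S. \<forall>Y\<in>S. \<forall>Z\<in>S. \<forall>W\<in>S. I X (j Y Z) W \<longrightarrow> I X Z W) \<and>
     (\<forall>X\<in>S. \<forall>Y\<in>S. \<forall>Z\<in>S. \<forall>W\<in>S. I X Z W \<and> I X Y (j Z W) \<longrightarrow> I X (j Y Z) W) \<and>
     (\<forall>X\<in>S. \<forall>Y\<in>S. \<forall>Z\<in>S. \<forall>W\<in>S. I X (j Y Z) W \<longrightarrow> I X Y (j Z W))"

text \<open>Armstrong's axioms for a relation R, where R X Y stands for X \<rightarrow> Y.\<close>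
definition armstrong :: "('a::lattice \<Rightarrow> 'a \<Rightarrow> bool) \<Rightarrow> bool" where
  "armstrong R \<longleftrightarrow>
     (\<forall>X Y Z. R X Y \<and> R Y Z \<longrightarrow> R X Z) \<and>
     (\<forall>X Y. Y \<le> X \<longrightarrow> R X Y) \<and>
     (\<forall>X Y Z. R X Y \<longrightarrow> R (sup X Z) (sup Y Z))"

definition supseteq_bot :: "('a \<Rightarrow> 'a \<Rightarrow> 'a \<Rightarrow> bool) \<Rightarrow> 'a \<Rightarrow> 'a \<Rightarrow> bool" where
  "supseteq_bot I A B \<longleftrightarrow> I B B A"

definition closed_bot :: "('a::order \<Rightarrow> 'a \<Rightarrow> 'a \<Rightarrow> bool) \<Rightarrow> 'a \<Rightarrow> bool" where
  "closed_bot I X \<longleftrightarrow> (\<forall>Y. supseteq_bot I X Y \<longrightarrow> Y \<le> X)"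

definition Lc :: "('a::order \<Rightarrow> 'a \<Rightarrow> 'a \<Rightarrow> bool) \<Rightarrow> 'a set" where
  "Lc I = {X. closed_bot I X}"

definition cl :: "('a::order \<Rightarrow> 'a \<Rightarrow> 'a \<Rightarrow> bool) \<Rightarrow> 'a \<Rightarrow> 'a" where
  "cl I X = (GREATEST Y. supseteq_bot I X Y)"

definition join_c :: "('a::lattice \<Rightarrow> 'a \<Rightarrow> 'a \<Rightarrow> bool) \<Rightarrow> 'a \<Rightarrow> 'a \<Rightarrow> 'a" where
  "join_c I X Y = cl I (sup X Y)"

definition polymatroid_on ::
  "'a::order set \<Rightarrow> ('a \<Rightarrow> 'a \<Rightarrow> 'a) \<Rightarrow> ('a \<Rightarrow> 'a \<Rightarrow> 'a) \<Rightarrow> ('a \<Rightarrow> real) \<Rightarrow> bool" where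
  "polymatroid_on S j m h \<longleftrightarrow>
     (\<forall>X\<in>S. 0 \<le> h X) \<and>
     (\<forall>X\<in>S. \<forall>Y\<in>S. Y \<le> X \<longrightarrow> h Y \<le> h X) \<and>
     (\<forall>X\<in>S. \<forall>Y\<in>S. h X + h Y \<ge> h (j X Y) + h (m X Y))"

definition rel_of_h :: "('a::lattice \<Rightarrow> real) \<Rightarrow> 'a \<Rightarrow> 'a \<Rightarrow> 'a \<Rightarrow> bool" where
  "rel_of_h h X Y Z \<longleftrightarrow> h (sup X Z) + h (sup Y Z) = h (sup (sup X Y) Z) + h Z"

end

theory Submission
  imports Defs
begin

context
  fixes I :: "'a::{finite,lattice} \<Rightarrow> 'a \<Rightarrow> 'a \<Rightarrow> bool"
  assumes sg: "semi_graphoid_on UNIV sup I"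
begin

lemma ex: "I X Y X" using sg unfolding semi_graphoid_on_def by blast
lemma sym: "I X Y W \<Longrightarrow> I Y X W" using sg unfolding semi_graphoid_on_def by blast
lemma dec: "I X (sup Y Z) W \<Longrightarrow> I X Z W" using sg unfolding semi_graphoid_on_def by blast
lemma con: "I X Z W \<Longrightarrow> I X Y (sup Z W) \<Longrightarrow> I X (sup Y Z) W" using sg unfolding semi_graphoid_on_def by blast
lemma wu: "I X (sup Y Z) W \<Longrightarrow> I X Y (sup Z W)" using sg unfolding semi_graphoid_on_def by blast

lemma L0: "Y \<le> W \<Longrightarrow> I X Y W"
proof -
  assume "Y \<le> W"
  have "I X W W" using sym[OF ex] .
  then have "I X (sup W Y) W" using \<open>Y \<le> W\<close> by (simp add: sup_absorb1)
  then show ?thesis by (rule dec)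
qed

lemma Lfun: "I Y Y X \<Longrightarrow> I Y V X"
proof -
  assume a: "I Y Y X"
  have "I Y V (sup Y X)" by (rule sym, rule L0, simp)
  then have "I Y (sup V Y) X" using con[OF a] by blast
  then show ?thesis using dec[of Y Y V X] by (simp add: sup_commute)
qed

lemma Laug: "I Y Y X \<Longrightarrow> I Y Y (sup X Z)"
proof -
  assume a: "I Y Y X"
  have "I Y (sup Y Z) X" by (rule Lfun[OF a])
  then have "I Y Y (sup Z X)" by (rule wu)
  then show ?thesis by (simp add: sup_commute)
qed

lemma Lx: "I W' W' W \<Longrightarrow> I X W' W"
  by (rule sym, rule Lfun)

lemma Ltrans: "I Y Y X \<Longrightarrow> I Z Z Y \<Longrightarrow> I Z Z X"
proof -
  assume a: "I Y Y X" and b: "I Z Z Y"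
  have 1: "I Z Y X" using Lx[OF a] .
  have "I Z (sup Z X) Y" using Lfun[OF b] .
  then have 2: "I Z Z (sup X Y)" by (rule wu)
  have 3: "I Z Z (sup Y X)" using 2 by (simp add: sup_commute)
  have "I Z (sup Z Y) X" using con[OF 1 3] .
  then show ?thesis using dec[of Z Y Z X] by (simp add: sup_commute)
qed

lemma Lunion: "I A A W \<Longrightarrow> I B B W \<Longrightarrow> I (sup A B) (sup A B) W"
proof -
  assume a: "I A A W" and b: "I B B W"
  have 1: "I (sup A B) B W" using Lx[OF b] .
  have "I A A (sup W B)" using Laug[OF a] .
  then have 2: "I (sup A B) A (sup B W)" using Lx by (simp add: sup_commute)
  show ?thesis using con[OF 1 2] .
qed

lemma Ldet_right: "I X Y W \<Longrightarrow> I Y' Y' Y \<Longrightarrow> I X (sup Y Y') W"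
proof -
  assume a: "I X Y W" and b: "I Y' Y' Y"
  have "I Y' Y' (sup Y W)" using Laug[OF b] .
  then have "I X Y' (sup Y W)" by (rule Lx)
  then have "I X (sup Y' Y) W" using con[OF a] by blast
  then show ?thesis by (simp add: sup_commute)
qed

lemma Lcond_up: "I X Y W \<Longrightarrow> I W' W' W \<Longrightarrow> I X Y (sup W' W)"
proof -
  assume a: "I X Y W" and b: "I W' W' W"
  have "I W' W' (sup W Y)" using Laug[OF b] .
  then have "I X W' (sup Y W)" using Lx by (simp add: sup_commute)
  then have "I X (sup W' Y) W" using con[OF a] by blast
  then have "I X (sup Y W') W" by (simp add: sup_commute)
  then have "I X Y (sup W' W)" by (rule wu)
  then show ?thesis .
qed

lemma Lcond_down: "I X Y (sup W' W) \<Longrightarrow> I W' W' W \<Longrightarrow> I X Y W"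
proof -
  assume a: "I X Y (sup W' W)" and b: "I W' W' W"
  have "I X W' W" using Lx[OF b] .
  then have "I X (sup Y W') W" using con a by blast
  then show ?thesis using dec[of X W' Y W] by (simp add: sup_commute)
qed

lemma cl_ex: "supseteq_bot I X (cl I X) \<and> (\<forall>Y. supseteq_bot I X Y \<longrightarrow> Y \<le> cl I X)"
proof -
  let ?S = "{Y. supseteq_bot I X Y}"
  have "X \<in> ?S" by (simp add: supseteq_bot_def L0)
  then obtain m where m: "m \<in> ?S" "\<forall>b\<in>?S. m \<le> b \<longrightarrow> m = b"
    using finite_has_maximal[of ?S] by auto
  have g: "\<forall>y\<in>?S. y \<le> m"
  proof
    fix y assume "y \<in> ?S"
    then have "sup m y \<in> ?S" using m(1) Lunion unfolding supseteq_bot_def by auto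
    then have "m = sup m y" using m(2) by auto
    then show "y \<le> m" by (metis sup.cobounded2)
  qed
  have "cl I X = m" unfolding cl_def
    by (rule Greatest_equality) (use m g in auto)
  then show ?thesis using m g by auto
qed

lemma cl_ge: "X \<le> cl I X"
  using cl_ex[of X] L0[of X X X] unfolding supseteq_bot_def by auto

lemma cl_det: "I (cl I X) (cl I X) X"
  using cl_ex[of X] unfolding supseteq_bot_def by auto

lemma cl_closed: "cl I X \<in> Lc I"
  unfolding Lc_def closed_bot_def
proof (safe)
  fix Y assume "supseteq_bot I (cl I X) Y"
  then have "I Y Y X" using Ltrans[OF cl_det] unfolding supseteq_bot_def by blast
  then show "Y \<le> cl I X" using cl_ex unfolding supseteq_bot_def by blast
qed

lemma inf_closed: "X \<in> Lc I \<Longrightarrow> Y \<in> Lc I \<Longrightarrow> inf X Y \<in> Lc I"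
  unfolding Lc_def closed_bot_def
proof (safe)
  fix Z assume X: "\<forall>Y. supseteq_bot I X Y \<longrightarrow> Y \<le> X" and Y: "\<forall>Z. supseteq_bot I Y Z \<longrightarrow> Z \<le> Y"
    and Z: "supseteq_bot I (inf X Y) Z"
  have "I (inf X Y) (inf X Y) X" "I (inf X Y) (inf X Y) Y" by (rule L0, simp)+
  then have "I Z Z X" "I Z Z Y" using Z Ltrans unfolding supseteq_bot_def by blast+
  then show "Z \<le> inf X Y" using X Y unfolding supseteq_bot_def by auto
qed

lemma clsup: "I (cl I V) (cl I V) V" and clsup2: "sup V (cl I V) = cl I V"
  using cl_det cl_ge by (auto simp: sup_absorb2)

lemma arm: "armstrong (supseteq_bot I)"
  unfolding armstrong_def supseteq_bot_def
proof (intro conjI allI impI)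
  fix X Y Z assume "I Y Y X \<and> I Z Z Y" then show "I Z Z X" using Ltrans by blast
next
  fix X Y :: 'a assume "Y \<le> X" then show "I Y Y X" by (rule L0)
next
  fix X Y Z assume "I Y Y X"
  then have "I Y Y (sup X Z)" by (rule Laug)
  moreover have "I Z Z (sup X Z)" by (rule L0, simp)
  ultimately show "I (sup Y Z) (sup Y Z) (sup X Z)" by (rule Lunion)
qed

lemma sgc: "semi_graphoid_on (Lc I) (join_c I) I"
  unfolding semi_graphoid_on_def join_c_def
proof (intro conjI ballI impI)
  fix X Y assume "X \<in> Lc I" show "I X Y X" by (rule ex)
next
  fix X Y W show "I X Y W = I Y X W" using sym by blast
next
  fix X Y Z W assume "I X (cl I (sup Y Z)) W"
  then have "I X (sup (cl I (sup Y Z)) Z) W"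
    using cl_ge[of "sup Y Z"] by (simp add: sup_absorb1 le_supE)
  then show "I X Z W" by (rule dec)
next
  fix X Y Z W assume a: "I X Z W \<and> I X Y (cl I (sup Z W))"
  have "I X Y (sup (cl I (sup Z W)) (sup Z W))" using a clsup2[of "sup Z W"] by (simp add: sup_commute)
  then have "I X Y (sup Z W)" using Lcond_down clsup by blast
  then have "I X (sup Y Z) W" using con a by blast
  then have "I X (sup (sup Y Z) (cl I (sup Y Z))) W" using Ldet_right clsup by blast
  then show "I X (cl I (sup Y Z)) W" using clsup2 by simp
next
  fix X Y Z W assume "I X (cl I (sup Y Z)) W"
  then have "I X (sup (cl I (sup Y Z)) (sup Y Z)) W" using clsup2[of "sup Y Z"] by (simp add: sup_commute)
  then have "I X (sup Y Z) W" by (rule dec)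
  then have "I X Y (sup Z W)" by (rule wu)
  then have "I X Y (sup (cl I (sup Z W)) (sup Z W))" using Lcond_up clsup by blast
  then show "I X Y (cl I (sup Z W))" using clsup2[of "sup Z W"] by (simp add: sup_commute)
qed

lemma poly: "polymatroid_on UNIV sup inf h \<Longrightarrow> I = rel_of_h h \<Longrightarrow> polymatroid_on (Lc I) (join_c I) inf h"
proof -
  assume p: "polymatroid_on UNIV sup inf h" and r: "I = rel_of_h h"
  have hc: "h (cl I V) = h V" for V
  proof -
    have "rel_of_h h (cl I V) (cl I V) V" using clsup r by simp
    then show ?thesis using clsup2[of V] unfolding rel_of_h_def by (simp add: sup_commute)
  qed
  show ?thesis using p unfolding polymatroid_on_def join_c_def by (simp add: hc)
qed

end

theorem theorem2:
  fixes I :: "'a::{finite,lattice} \<Rightarrow> 'a \<Rightarrow> 'a \<Rightarrow> bool"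
  assumes "semi_graphoid_on UNIV sup I"
  shows "armstrong (supseteq_bot I)
    \<and> ((\<forall>X\<in>Lc I. \<forall>Y\<in>Lc I. inf X Y \<in> Lc I \<and> join_c I X Y \<in> Lc I)
         \<and> semi_graphoid_on (Lc I) (join_c I) I)
    \<and> (\<forall>h. polymatroid_on UNIV sup inf h \<and> I = rel_of_h h \<longrightarrow>
         polymatroid_on (Lc I) (join_c I) inf h)"
  using arm[OF assms] sgc[OF assms] poly[OF assms] inf_closed[OF assms] cl_closed[OF assms]
  unfolding join_c_def by blast

end
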